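(* Let $\mathbf K$ be a commutative field, $p,q,r\in\mathbb N$, $A\in\mathbf K^{\mathcal M_{p\times r}}$ and $B\in\mathbf K^{\mathcal M_{r\times q}}$. Then $$\dim\big(\overline{AB}^{rec}\big)\leq \dim\big(\overline{A}^{rec}\big)\,\dim\big(\overline{B}^{rec}\big)$$ (dimensions taken in $\mathbb N\cup\{\infty\}$). In particular, the matrix product of two recurrence matrices $A\in\mathrm{Rec}_{p\times r}(\mathbf K)$, $B\in\mathrm{Rec}_{r\times q}(\mathbf K)$ is a recurrence matrix.
   Context: For $p,q,l\in\mathbb N$, $\mathcal M_{p\times q}^l$ is the set of pairs $(U,W)$ of words of common length $l$ with $U\in\{0,\dots,p-1\}^l$, $W\in\{0,\dots,q-1\}^l$, and $\mathcal M_{p\times q}=\bigcup_{l\ge0}\mathcal M_{p\times q}^l$, a monoid under concatenation $(U,W)(U',W')=(UU',WW')$. $\mathbf K^{\mathcal M_{p\times q}}$ is the vector space of all functions $\mathcal M_{p\times q}\to\mathbf K$; the value of $A$ at $(U,W)$ is written $A[U,W]$. For $(S,T)\in\mathcal M_{p\times q}$ the shift map $\rho(S,T)$ is the linear endomorphism of $\mathbf K^{\mathcal M_{p\times q}}$ given by $(\rho(S,T)A)[U,W]=A[US,WT]$. The recursive closure $\overline{A}^{rec}$ of $A$ is the linear span of $\{\rho(S,T)A:(S,T)\in\mathcal M_{p\times q}\}$; its dimension is the complexity of $A$, and $\mathrm{Rec}_{p\times q}(\mathbf K)$ (recurrence matrices) is the set of $A$ of finite complexity. The matrix product of $A\in\mathbf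 K^{\mathcal M_{p\times r}}$ and $B\in\mathbf K^{\mathcal M_{r\times q}}$ is $AB\in\mathbf K^{\mathcal M_{p\times q}}$ with $(AB)[U,W]=\sum_{V\in\{0,\dots,r-1\}^l}A[U,V]B[V,W]$ for $(U,W)\in\mathcal M_{p\times q}^l$. *)

theory Defs
  imports Main "HOL-Library.Extended_Nat" "HOL-Library.Function_Algebras"
begin

text \<open>An element of
  K^{M_{p x q}} is represented by a function on pairs of words; only its values on
  M_{p x q} matter (all constructions below restrict to M_{p x q}, setting 0 outside).\<close>

definition words :: "nat \<Rightarrow> nat \<Rightarrow> nat list set" where
  "words p l = {U. length U = l \<and> set U \<subseteq> {..<p}}"

definition Mpq :: "nat \<Rightarrow> nat \<Rightarrow> (nat list \<times> nat list) set" where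
  "Mpq p q = {(U, W). length U = length W \<and> set U \<subseteq> {..<p} \<and> set W \<subseteq> {..<q}}"

type_synonym 'k recmat = "nat list \<times> nat list \<Rightarrow> 'k"

definition fscale :: "'k::field \<Rightarrow> 'k recmat \<Rightarrow> 'k recmat" where
  "fscale c f = (\<lambda>x. c * f x)"

definition shift :: "nat \<Rightarrow> nat \<Rightarrow> nat list \<times> nat list \<Rightarrow> 'k::field recmat \<Rightarrow> 'k recmat" where
  "shift p q ST A = (\<lambda>(U, W). if (U, W) \<in> Mpq p q then A (U @ fst ST, W @ snd ST) else 0)"

definition rec_closure :: "nat \<Rightarrow> nat \<Rightarrow> 'k::field recmat \<Rightarrow> 'k recmat set" where
  "rec_closure p q A = module.span fscale {shift p q ST A | ST. ST \<in> Mpq p q}"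

definition fdim :: "'k::field recmat set \<Rightarrow> enat" where
  "fdim V = (if \<exists>F. finite F \<and> V \<subseteq> module.span fscale F
             then enat (vector_space.dim fscale V) else \<infinity>)"

definition complexity :: "nat \<Rightarrow> nat \<Rightarrow> 'k::field recmat \<Rightarrow> enat" where
  "complexity p q A = fdim (rec_closure p q A)"

definition Rec :: "nat \<Rightarrow> nat \<Rightarrow> 'k::field recmat set" where
  "Rec p q = {A. complexity p q A < \<infinity>}"

definition mprod :: "nat \<Rightarrow> nat \<Rightarrow> nat \<Rightarrow> 'k::field recmat \<Rightarrow> 'k recmat \<Rightarrow> 'k recmat" where
  "mprod p r q A B = (\<lambda>(U, W). if (U, W) \<in> Mpq p q
      then (\<Sum>V\<in>words r (length U). A (U, V) * B (V, W)) else 0)"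

end

theory Submission
  imports Defs
begin

interpretation fs: vector_space "fscale :: 'k::field \<Rightarrow> 'k recmat \<Rightarrow> 'k recmat"
  by unfold_locales (auto simp: fscale_def fun_eq_iff algebra_simps)

lemma sum_fun_apply: "(sum f A) x = (\<Sum>a\<in>A. f a x)"
  by (induction A rule: infinite_finite_induct) auto

lemma words_append_bij:
  "bij_betw (\<lambda>(V1, V2). V1 @ V2) (words r a \<times> words r b) (words r (a + b))"
proof (rule bij_betwI')
  fix x y assume "x \<in> words r a \<times> words r b" "y \<in> words r a \<times> words r b"
  then obtain x1 x2 y1 y2 where xy: "x = (x1, x2)" "y = (y1, y2)" "length x1 = a" "length y1 = a"
    by (cases x, cases y) (auto simp: words_def)
  show "((case x of (V1, V2) \<Rightarrow> V1 @ V2) = (case y of (V1, V2) \<Rightarrow> V1 @ V2)) = (x = y)"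
    using xy by (simp add: append_eq_append_conv)
next
  fix x assume "x \<in> words r a \<times> words r b"
  then show "(case x of (V1, V2) \<Rightarrow> V1 @ V2) \<in> words r (a + b)" by (auto simp: words_def)
next
  fix y assume y: "y \<in> words r (a + b)"
  have "take a y \<in> words r a" "drop a y \<in> words r b"
    using y by (auto simp: words_def dest: in_set_takeD in_set_dropD)
  then show "\<exists>x\<in>words r a \<times> words r b. y = (case x of (V1, V2) \<Rightarrow> V1 @ V2)"
    by (intro bexI[of _ "(take a y, drop a y)"]) auto
qed

lemma finite_words: "finite (words r l)"
proof -
  have "words r l \<subseteq> {xs. set xs \<subseteq> {..<r} \<and> length xs = l}" by (auto simp: words_def)
  moreover have "finite {xs. set xs \<subseteq> {..<r} \<and> length xs = l}"
    by (rule finite_lists_length_eq) simp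
  ultimately show ?thesis by (rule finite_subset)
qed

lemma shift_mprod:
  assumes ST: "(S, T) \<in> Mpq p q"
  shows "shift p q (S, T) (mprod p r q A B) =
    (\<Sum>V2\<in>words r (length S). mprod p r q (shift p r (S, V2) A) (shift r q (V2, T) B))"
proof (rule ext, clarify)
  fix U W
  show "shift p q (S, T) (mprod p r q A B) (U, W) =
    (\<Sum>V2\<in>words r (length S). mprod p r q (shift p r (S, V2) A) (shift r q (V2, T) B)) (U, W)"
  proof (cases "(U, W) \<in> Mpq p q")
    case False
    then show ?thesis by (simp add: sum_fun_apply shift_def mprod_def)
  next
    case True
    have UW: "(U @ S, W @ T) \<in> Mpq p q" using True ST by (auto simp: Mpq_def)
    have "shift p q (S, T) (mprod p r q A B) (U, W) =
        (\<Sum>V\<in>words r (length U + length S). A (U @ S, V) * B (V, W @ T))"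
      using True UW by (simp add: shift_def mprod_def)
    also have "\<dots> = (\<Sum>(V1, V2)\<in>words r (length U) \<times> words r (length S).
                       A (U @ S, V1 @ V2) * B (V1 @ V2, W @ T))"
      using sum.reindex_bij_betw[OF words_append_bij[of r "length U" "length S"],
          of "\<lambda>V. A (U @ S, V) * B (V, W @ T)"]
      by (simp add: case_prod_unfold)
    also have "\<dots> = (\<Sum>V2\<in>words r (length S). \<Sum>V1\<in>words r (length U).
                       A (U @ S, V1 @ V2) * B (V1 @ V2, W @ T))"
      by (subst sum.cartesian_product[symmetric]) (rule sum.swap)
    also have "\<dots> = (\<Sum>V2\<in>words r (length S).
        mprod p r q (shift p r (S, V2) A) (shift r q (V2, T) B) (U, W))"
    proof (rule sum.cong[OF refl])
      fix V2 assume V2: "V2 \<in> words r (length S)"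
      show "(\<Sum>V1\<in>words r (length U). A (U @ S, V1 @ V2) * B (V1 @ V2, W @ T)) =
          mprod p r q (shift p r (S, V2) A) (shift r q (V2, T) B) (U, W)"
        unfolding mprod_def using True
        by (auto intro!: sum.cong simp: shift_def Mpq_def words_def)
    qed
    finally show ?thesis by (simp add: sum_fun_apply)
  qed
qed

lemma mprod_zero_left: "mprod p r q 0 B = 0"
  by (auto simp: mprod_def fun_eq_iff)
lemma mprod_zero_right: "mprod p r q A 0 = 0"
  by (auto simp: mprod_def fun_eq_iff)
lemma mprod_add_left: "mprod p r q (A + A') B = mprod p r q A B + mprod p r q A' B"
  by (auto simp: mprod_def fun_eq_iff sum.distrib algebra_simps)
lemma mprod_add_right: "mprod p r q A (B + B') = mprod p r q A B + mprod p r q A B'"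
  by (auto simp: mprod_def fun_eq_iff sum.distrib algebra_simps)
lemma mprod_scale_left: "mprod p r q (fscale c A) B = fscale c (mprod p r q A B)"
  by (auto simp: mprod_def fun_eq_iff fscale_def sum_distrib_left algebra_simps)
lemma mprod_scale_right: "mprod p r q A (fscale c B) = fscale c (mprod p r q A B)"
  by (auto simp: mprod_def fun_eq_iff fscale_def sum_distrib_left algebra_simps)

lemma mprod_span:
  assumes a: "a \<in> fs.span BA" and b: "b \<in> fs.span BB"
  shows "mprod p r q a b \<in> fs.span ((\<lambda>(x, y). mprod p r q x y) ` (BA \<times> BB))"
  using a
proof (induction rule: fs.span_induct_alt)
  case base
  then show ?case using mprod_zero_left fs.span_zero by metis
next
  case (step c x y)
  have "mprod p r q x b \<in> fs.span ((\<lambda>(x, y). mprod p r q x y) ` (BA \<times> BB))"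
    using b
  proof (induction rule: fs.span_induct_alt)
    case base
    then show ?case using mprod_zero_right fs.span_zero by metis
  next
    case (step d z w)
    have "mprod p r q x z \<in> fs.span ((\<lambda>(x, y). mprod p r q x y) ` (BA \<times> BB))"
      using step.hyps(1) \<open>x \<in> BA\<close> by (intro fs.span_base) force
    then show ?case using step.IH
      unfolding mprod_add_right mprod_scale_right by (intro fs.span_add fs.span_scale)
  qed
  then show ?case using step.IH
    unfolding mprod_add_left mprod_scale_left by (intro fs.span_add fs.span_scale)
qed

lemma closure_prod_subset:
  assumes SA: "{shift p r ST A | ST. ST \<in> Mpq p r} \<subseteq> fs.span BA"
    and SB: "{shift r q ST B | ST. ST \<in> Mpq r q} \<subseteq> fs.span BB"
  shows "rec_closure p q (mprod p r q A B) \<subseteq> fs.span ((\<lambda>(x, y). mprod p r q x y) ` (BA \<times> BB))"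
  unfolding rec_closure_def
proof (rule fs.span_minimal[OF _ fs.subspace_span], clarify)
  fix S T assume ST: "(S, T) \<in> Mpq p q"
  show "shift p q (S, T) (mprod p r q A B) \<in> fs.span ((\<lambda>(x, y). mprod p r q x y) ` (BA \<times> BB))"
    unfolding shift_mprod[OF ST]
  proof (rule fs.span_sum)
    fix V2 assume V2: "V2 \<in> words r (length S)"
    have "(S, V2) \<in> Mpq p r" "(V2, T) \<in> Mpq r q" using ST V2 by (auto simp: Mpq_def words_def)
    then have "shift p r (S, V2) A \<in> fs.span BA" "shift r q (V2, T) B \<in> fs.span BB"
      using SA SB by blast+
    then show "mprod p r q (shift p r (S, V2) A) (shift r q (V2, T) B)
        \<in> fs.span ((\<lambda>(x, y). mprod p r q x y) ` (BA \<times> BB))"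
      by (rule mprod_span)
  qed
qed

lemma fdim_le_card:
  assumes "V \<subseteq> fs.span F" "finite F"
  shows "fdim V \<le> enat (card F)"
  using assms fs.dim_le_card[OF assms] by (auto simp: fdim_def)

lemma fdim_basis:
  assumes "fdim V = enat m"
  obtains BV where "finite BV" "card BV = m" "V \<subseteq> fs.span BV"
proof -
  from assms obtain F where F: "finite F" "V \<subseteq> fs.span F" and m: "fs.dim V = m"
    by (auto simp: fdim_def split: if_splits)
  obtain BV where "BV \<subseteq> V" "fs.independent BV" "V \<subseteq> fs.span BV" "card BV = fs.dim V"
    by (rule fs.basis_exists)
  moreover have "finite BV"
    using fs.independent_span_bound[OF F(1) \<open>fs.independent BV\<close>] \<open>BV \<subseteq> V\<close> F(2) by auto
  ultimately show ?thesis using that m by auto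
qed

lemma fdim_zero_span:
  assumes "fdim V = enat 0" shows "V \<subseteq> fs.span {}"
  using fdim_basis[OF assms] by (metis card_eq_0_iff)

theorem mainTheorem1:
  fixes A B :: "'k::field recmat" and p q r :: nat
  shows "complexity p q (mprod p r q A B) \<le> complexity p r A * complexity r q B
         \<and> (A \<in> Rec p r \<and> B \<in> Rec r q \<longrightarrow> mprod p r q A B \<in> Rec p q)"
proof -
  let ?SA = "{shift p r ST A | ST. ST \<in> Mpq p r}"
  let ?SB = "{shift r q ST B | ST. ST \<in> Mpq r q}"
  have cA: "rec_closure p r A = fs.span ?SA" and cB: "rec_closure r q B = fs.span ?SB"
    by (simp_all add: rec_closure_def)
  have SAs: "?SA \<subseteq> fs.span ?SA" and SBs: "?SB \<subseteq> fs.span ?SB" by (simp_all add: fs.span_superset)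
  have main: "complexity p q (mprod p r q A B) \<le> complexity p r A * complexity r q B"
  proof (cases "complexity p r A = enat 0 \<or> complexity r q B = enat 0")
    case True
    then show ?thesis
    proof
      assume "complexity p r A = enat 0"
      then have "rec_closure p r A \<subseteq> fs.span {}"
        unfolding complexity_def by (rule fdim_zero_span)
      moreover have "?SA \<subseteq> rec_closure p r A" unfolding cA by (rule fs.span_superset)
      ultimately have "?SA \<subseteq> fs.span {}" by (rule order_trans[rotated])
      from closure_prod_subset[OF this SBs] have "rec_closure p q (mprod p r q A B) \<subseteq> fs.span {}"
        by simp
      then have "complexity p q (mprod p r q A B) \<le> 0"
        using fdim_le_card[of _ "{}"] unfolding complexity_def by (simp add: zero_enat_def)
      then show ?thesis by simp
    next
      assume "complexity r q B = enat 0"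
      then have "rec_closure r q B \<subseteq> fs.span {}"
        unfolding complexity_def by (rule fdim_zero_span)
      moreover have "?SB \<subseteq> rec_closure r q B" unfolding cB by (rule fs.span_superset)
      ultimately have "?SB \<subseteq> fs.span {}" by (rule order_trans[rotated])
      from closure_prod_subset[OF SAs this] have "rec_closure p q (mprod p r q A B) \<subseteq> fs.span {}"
        by simp
      then have "complexity p q (mprod p r q A B) \<le> 0"
        using fdim_le_card[of _ "{}"] unfolding complexity_def by (simp add: zero_enat_def)
      then show ?thesis by simp
    qed
  next
    case False
    show ?thesis
    proof (cases "complexity p r A = \<infinity> \<or> complexity r q B = \<infinity>")
      case True
      moreover have "complexity p r A \<noteq> 0" "complexity r q B \<noteq> 0"
        using \<open>\<not> (complexity p r A = enat 0 \<or> complexity r q B = enat 0)\<close>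
        by (simp_all add: zero_enat_def)
      ultimately have "complexity p r A * complexity r q B = \<infinity>"
        by (simp add: imult_is_infinity)
      then show ?thesis by simp
    next
      case False
      then obtain m n where m: "complexity p r A = enat m" and n: "complexity r q B = enat n"
        by auto
      obtain BA where BA: "finite BA" "card BA = m" "rec_closure p r A \<subseteq> fs.span BA"
        using fdim_basis m unfolding complexity_def by blast
      obtain BB where BB: "finite BB" "card BB = n" "rec_closure r q B \<subseteq> fs.span BB"
        using fdim_basis n unfolding complexity_def by blast
      have "?SA \<subseteq> rec_closure p r A" unfolding cA by (rule fs.span_superset)
      then have "?SA \<subseteq> fs.span BA" using BA(3) by (rule order_trans)
      moreover have "?SB \<subseteq> rec_closure r q B" unfolding cB by (rule fs.span_superset)
      then have "?SB \<subseteq> fs.span BB" using BB(3) by (rule order_trans)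
      ultimately have sub: "rec_closure p q (mprod p r q A B)
          \<subseteq> fs.span ((\<lambda>(x, y). mprod p r q x y) ` (BA \<times> BB))"
        by (rule closure_prod_subset)
      have fin: "finite ((\<lambda>(x, y). mprod p r q x y) ` (BA \<times> BB))" using BA BB by simp
      have "card ((\<lambda>(x, y). mprod p r q x y) ` (BA \<times> BB)) \<le> card (BA \<times> BB)"
        using BA BB by (intro card_image_le) simp
      also have "\<dots> = m * n" using BA BB by (simp add: card_cartesian_product)
      finally have "complexity p q (mprod p r q A B) \<le> enat (m * n)"
        using fdim_le_card[OF sub fin] unfolding complexity_def
        by (meson enat_ord_simps(1) order_trans)
      then show ?thesis using m n by simp
    qed
  qed
  moreover have "A \<in> Rec p r \<and> B \<in> Rec r q \<longrightarrow> mprod p r q A B \<in> Rec p q"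
  proof
    assume "A \<in> Rec p r \<and> B \<in> Rec r q"
    then obtain m n where "complexity p r A = enat m" "complexity r q B = enat n"
      by (auto simp: Rec_def)
    then have "complexity p q (mprod p r q A B) \<le> enat (m * n)" using main by simp
    then show "mprod p r q A B \<in> Rec p q"
      unfolding Rec_def by (cases "complexity p q (mprod p r q A B)") auto
  qed
  ultimately show ?thesis by blast
qed

end
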